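(* Let $d\ge1$ and let $\sigma\subset\mathbb{R}^d$ be an object with center $c$ and width $w\ge 1$. Let $i=\lfloor\log_2 w\rfloor$. For each $j\in[d]$ write uniquely $c(x_j)=z_j+f_j$ with $z_j\in 2^{i+1}\mathbb{Z}$ and $f_j\in[0,2^{i+1})$, and define the point $r\in(2^{i+1}\mathbb{Z})^d$ by $r(x_j)=z_j$ if $f_j\in[0,2^i)$ and $r(x_j)=z_j+2^{i+1}$ if $f_j\in[2^i,2^{i+1})$. Then $r\in\sigma$.
   Context: An object is a compact subset of $\mathbb{R}^d$ with non-empty interior; $\partial\sigma$ is its boundary; $d_\infty$ is the $L_\infty$ distance; $p(x_j)$ is the $j$th coordinate of $p$; $\beta\mathbb{Z}=\{\beta z:z\in\mathbb{Z}\}$. For $x\in\sigma$, $\alpha(x)=\min_{y\in\partial\sigma}d_\infty(x,y)/\max_{y\in\partial\sigma}d_\infty(x,y)$; a center of $\sigma$ is a point $c\in\sigma$ maximizing $\alpha(x)$ over $x\in\sigma$, and the width of $\sigma$ is $\min_{y\in\partial\sigma}d_\infty(c,y)$. *)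

theory Defs
  imports "HOL-Analysis.Analysis"
begin

definition dinf :: "real^'n \<Rightarrow> real^'n \<Rightarrow> real" where
  "dinf x y = Max (range (\<lambda>j. \<bar>x $ j - y $ j\<bar>))"

definition is_object :: "(real^'n) set \<Rightarrow> bool" where
  "is_object S \<longleftrightarrow> compact S \<and> interior S \<noteq> {}"

definition alpha :: "(real^'n) set \<Rightarrow> real^'n \<Rightarrow> real" where
  "alpha S x = (INF y\<in>frontier S. dinf x y) / (SUP y\<in>frontier S. dinf x y)"

definition is_center :: "(real^'n) set \<Rightarrow> real^'n \<Rightarrow> bool" where
  "is_center S c \<longleftrightarrow> c \<in> S \<and> (\<forall>x\<in>S. alpha S x \<le> alpha S c)"

definition width_at :: "(real^'n) set \<Rightarrow> real^'n \<Rightarrow> real" where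
  "width_at S c = (INF y\<in>frontier S. dinf c y)"

end

theory Submission
  imports Defs
begin

lemma dinf_less:
  fixes x y :: "real^'n"
  assumes "\<And>j. \<bar>x $ j - y $ j\<bar> < b"
  shows "dinf x y < b"
proof -
  have "finite (range (\<lambda>j. \<bar>x $ j - y $ j\<bar>))" by simp
  then show ?thesis unfolding dinf_def using assms by (subst Max_less_iff) auto
qed

lemma dinf_nonneg: "0 \<le> dinf (x::real^'n) y"
proof -
  have "finite (range (\<lambda>j. \<bar>x $ j - y $ j\<bar>))" by simp
  then show ?thesis unfolding dinf_def by (subst Max_ge_iff) auto
qed

theorem lemma5:
  fixes \<sigma> :: "(real^'n) set" and c :: "real^'n" and w :: real and i :: int
    and z f :: "'n \<Rightarrow> real" and r :: "real^'n"
  assumes "is_object \<sigma>"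
    and "is_center \<sigma> c"
    and "w = width_at \<sigma> c"
    and "w \<ge> 1"
    and "i = \<lfloor>log 2 w\<rfloor>"
    and "\<And>j. z j = 2 powr (i + 1) * \<lfloor>c $ j / 2 powr (i + 1)\<rfloor>"
    and "\<And>j. f j = c $ j - z j"
    and "\<And>j. r $ j = (if f j < 2 powr i then z j else z j + 2 powr (i + 1))"
  shows "r \<in> \<sigma>"
proof (rule ccontr)
  assume nr: "r \<notin> \<sigma>"
  have cl: "closed \<sigma>" using assms(1) compact_imp_closed is_object_def by blast
  have cs: "c \<in> \<sigma>" using assms(2) is_center_def by blast
  have Pi: "2 powr (real_of_int (i + 1)) = 2 * 2 powr (real_of_int i)"
    by (simp add: powr_add)
  have pipos: "0 < 2 powr (real_of_int i)" by simp
  have iw: "2 powr (real_of_int i) \<le> w"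
  proof -
    have "real_of_int i \<le> log 2 w" using assms(5) by simp
    then have "2 powr (real_of_int i) \<le> 2 powr (log 2 w)" by simp
    also have "\<dots> = w" using assms(4) by simp
    finally show ?thesis .
  qed
  have coord: "\<bar>c $ j - r $ j\<bar> \<le> w" for j
  proof -
    define P where "P = 2 powr (real_of_int (i + 1))"
    have Ppos: "P > 0" unfolding P_def by simp
    have fl1: "real_of_int \<lfloor>c $ j / P\<rfloor> \<le> c $ j / P" by linarith
    have fl2: "c $ j / P < real_of_int \<lfloor>c $ j / P\<rfloor> + 1" by linarith
    have "P * real_of_int \<lfloor>c $ j / P\<rfloor> \<le> P * (c $ j / P)"
      using fl1 Ppos by (intro mult_left_mono) auto
    then have a: "z j \<le> c $ j" using Ppos assms(6)[of j] unfolding P_def by simp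
    have "P * (c $ j / P) < P * (real_of_int \<lfloor>c $ j / P\<rfloor> + 1)"
      using fl2 Ppos by (intro mult_strict_left_mono) auto
    then have b: "c $ j < z j + P" using Ppos assms(6)[of j] unfolding P_def
      by (simp add: algebra_simps)
    have "\<bar>c $ j - r $ j\<bar> \<le> 2 powr (real_of_int i)"
      using a b assms(7)[of j] assms(8)[of j] Pi unfolding P_def by auto
    then show ?thesis using iw by linarith
  qed
  have "closed_segment c r \<inter> frontier \<sigma> \<noteq> {}"
    by (rule connected_Int_frontier) (use cs nr in auto)
  then obtain y where y: "y \<in> closed_segment c r" "y \<in> frontier \<sigma>" by blast
  then obtain u where u: "0 \<le> u" "u \<le> 1" "y = (1 - u) *\<^sub>R c + u *\<^sub>R r"
    by (auto simp: in_segment)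
  have "y \<noteq> r" using y(2) nr cl frontier_subset_closed by blast
  then have u1: "u < 1" using u by (cases "u = 1") auto
  have "dinf c y < w"
  proof (rule dinf_less)
    fix j
    have "c $ j - y $ j = u * (c $ j - r $ j)" unfolding u(3) by (simp add: algebra_simps)
    then have "\<bar>c $ j - y $ j\<bar> = u * \<bar>c $ j - r $ j\<bar>" using u by (simp add: abs_mult)
    also have "\<dots> \<le> u * w" using coord u by (intro mult_left_mono) auto
    also have "\<dots> < w" using u1 assms(4) by simp
    finally show "\<bar>c $ j - y $ j\<bar> < w" .
  qed
  moreover have "w \<le> dinf c y"
    unfolding assms(3) width_at_def
    by (rule cINF_lower[OF _ y(2)]) (auto intro!: bdd_belowI[where m=0] dinf_nonneg)
  ultimately show False by simp
qed

end
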